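(* Consider the following cooperative multi-player multi-armed bandit problem ("Problem B'"). There are $M$ players; player $P_i$ has arms $\mathcal{K}_i=\{1,\dots,K_i\}$. At each round $t$ each player picks $a_i(t)\in\mathcal{K}_i$, forming the tuple $a(t)=(a_1(t),\dots,a_M(t))$, which is observed by all players. For each tuple $a$ there is an unknown $1$-subgaussian distribution $F_a$ on $[0,1]$ with mean $\mu_a$; at round $t$ each player $i$ receives and observes only its own reward $X^i_{a(t)}(t)\sim F_{a(t)}$, the rewards being independent across players and rounds. Let $\mu^*=\max_a\mu_a$ and define player $i$'s expected regret $R_T=\mathbb{E}\big[T\mu^*-\sum_{t=1}^T X^i_{a(t)}(t)\big]$. Suppose every player runs \texttt{mUCB} using its own rewards: in the first $K_1\cdots K_M$ rounds, player $P_i$ starts at its arm $1$ and successively pulls each of its arms $K_{i+1}\cdots K_M$ consecutive times, repeating this epoch $K_1\cdots K_{i-1}$ times (so every tuple is played once); afterwards, at round $t$, player $i$ computes for each tuple $a$ the index $\eta^i_a(t)=\infty$ if $n_a(t)=0$ and otherwise $\eta^i_a(t)=\hat\mu^i_a(t)+\sqrt{2\log(1/\delta)/n_a(t)}$ with $\delta=1/t^2$, where $n_a(t)$ is the number of times tuple $a$ was played in the first $t$ rounds and $\hat\mu^i_a(t)$ is the average of player $i$'s own rewards from those rounds, and plays the $i$-th component of a tuple maximizing $\eta^i_a(t)$, ties broken in favour of the lexicographically smallest tuple. Then there exists an instance of this problem (choice of $M$, $K_1,\dots,K_M$ and distributions $F_a$) for which the expected regret grows linearly in $T$, i.e. there is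 a constant $c>0$ with $R_T\ge cT$ for all sufficiently large $T$.
   Context: Lexicographic order: $(x_1,\dots,x_M)<(y_1,\dots,y_M)$ iff there is $n$ with $x_j=y_j$ for all $j<n$ and $x_n<y_n$. Since rewards of all players are identically distributed, the expected regret is the same for every player. *)

theory Defs
  imports "HOL-Probability.Probability"
begin

text \<open>Players are indexed 0..M-1 (paper: 1..M); arm sets are {1..K i}.
  Arm tuples are lists of length M.\<close>

definition tuples :: "(nat \<Rightarrow> nat) \<Rightarrow> nat \<Rightarrow> nat list set" where
  "tuples K M = {a. length a = M \<and> (\<forall>i<M. 1 \<le> a ! i \<and> a ! i \<le> K i)}"

definition lex_less :: "nat list \<Rightarrow> nat list \<Rightarrow> bool" where
  "lex_less x y \<longleftrightarrow>
     (\<exists>n < min (length x) (length y). (\<forall>j<n. x ! j = y ! j) \<and> x ! n < y ! n)"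

definition n_init :: "(nat \<Rightarrow> nat) \<Rightarrow> nat \<Rightarrow> nat" where
  "n_init K M = (\<Prod>i<M. K i)"

definition init_tuple :: "(nat \<Rightarrow> nat) \<Rightarrow> nat \<Rightarrow> nat \<Rightarrow> nat list" where
  "init_tuple K M r = map (\<lambda>i. ((r - 1) div (\<Prod>j\<in>{i<..<M}. K j)) mod K i + 1) [0..<M]"

text \<open>A history h is the list of tuples played in rounds 1..length h (h!s is round s+1).
  A reward table \<omega> gives \<omega> (i, s, a) = reward player i would get in round s if tuple a is played.\<close>

definition play_count :: "nat list list \<Rightarrow> nat list \<Rightarrow> nat" where
  "play_count h a = length (filter (\<lambda>b. b = a) h)"

definition own_mean :: "(nat \<times> nat \<times> nat list \<Rightarrow> real) \<Rightarrow> nat \<Rightarrow> nat list list \<Rightarrow> nat list \<Rightarrow> real" where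
  "own_mean \<omega> i h a =
     (\<Sum>s<length h. if h ! s = a then \<omega> (i, Suc s, a) else 0) / real (play_count h a)"

definition mucb_delta :: "nat \<Rightarrow> real" where
  "mucb_delta t = 1 / (real t) ^ 2"

definition mucb_index :: "(nat \<times> nat \<times> nat list \<Rightarrow> real) \<Rightarrow> nat \<Rightarrow> nat list list \<Rightarrow> nat list \<Rightarrow> ereal" where
  "mucb_index \<omega> i h a =
     (if play_count h a = 0 then PInfty
      else ereal (own_mean \<omega> i h a
             + sqrt (2 * ln (1 / mucb_delta (length h)) / real (play_count h a))))"

definition lex_argmax :: "nat list set \<Rightarrow> (nat list \<Rightarrow> ereal) \<Rightarrow> nat list" where
  "lex_argmax A f =
     (THE a. a \<in> A \<and> (\<forall>b\<in>A. f b \<le> f a) \<and>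
        (\<forall>b\<in>A. (\<forall>c\<in>A. f c \<le> f b) \<longrightarrow> b \<noteq> a \<longrightarrow> lex_less a b))"

definition next_tuple :: "(nat \<Rightarrow> nat) \<Rightarrow> nat \<Rightarrow> (nat \<times> nat \<times> nat list \<Rightarrow> real) \<Rightarrow> nat list list \<Rightarrow> nat list" where
  "next_tuple K M \<omega> h =
     (if length h < n_init K M then init_tuple K M (Suc (length h))
      else map (\<lambda>i. lex_argmax (tuples K M) (mucb_index \<omega> i h) ! i) [0..<M])"

primrec mucb_history :: "(nat \<Rightarrow> nat) \<Rightarrow> nat \<Rightarrow> (nat \<times> nat \<times> nat list \<Rightarrow> real) \<Rightarrow> nat \<Rightarrow> nat list list" where
  "mucb_history K M \<omega> 0 = []"
| "mucb_history K M \<omega> (Suc t) =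
     mucb_history K M \<omega> t @ [next_tuple K M \<omega> (mucb_history K M \<omega> t)]"

definition reward_sum :: "(nat \<Rightarrow> nat) \<Rightarrow> nat \<Rightarrow> (nat \<times> nat \<times> nat list \<Rightarrow> real) \<Rightarrow> nat \<Rightarrow> nat \<Rightarrow> real" where
  "reward_sum K M \<omega> i T = (\<Sum>s<T. \<omega> (i, Suc s, mucb_history K M \<omega> T ! s))"

definition reward_space :: "(nat \<Rightarrow> nat) \<Rightarrow> nat \<Rightarrow> (nat list \<Rightarrow> real measure) \<Rightarrow> nat
    \<Rightarrow> (nat \<times> nat \<times> nat list \<Rightarrow> real) measure" where
  "reward_space K M F T = PiM ({..<M} \<times> {1..T} \<times> tuples K M) (\<lambda>(i, s, a). F a)"

definition arm_mean :: "real measure \<Rightarrow> real" where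
  "arm_mean D = (\<integral>x. x \<partial>D)"

definition mu_star :: "(nat \<Rightarrow> nat) \<Rightarrow> nat \<Rightarrow> (nat list \<Rightarrow> real measure) \<Rightarrow> real" where
  "mu_star K M F = Max ((\<lambda>a. arm_mean (F a)) ` tuples K M)"

definition expected_regret :: "(nat \<Rightarrow> nat) \<Rightarrow> nat \<Rightarrow> (nat list \<Rightarrow> real measure) \<Rightarrow> nat \<Rightarrow> nat \<Rightarrow> real" where
  "expected_regret K M F i T =
     real T * mu_star K M F - (\<integral>\<omega>. reward_sum K M \<omega> i T \<partial>reward_space K M F T)"

definition one_subgaussian :: "real measure \<Rightarrow> bool" where
  "one_subgaussian D \<longleftrightarrow>
     (\<forall>l::real. integrable D (\<lambda>x. exp (l * (x - arm_mean D))) \<and>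
        (\<integral>x. exp (l * (x - arm_mean D)) \<partial>D) \<le> exp (l ^ 2 / 2))"

end

theory Submission imports Defs begin

abbreviation K2 :: "nat \<Rightarrow> nat" where "K2 \<equiv> (\<lambda>_. 2)"

lemma tuples_K2: "tuples K2 2 = {[1,1],[1,2],[2,1],[2,2]}"
proof -
  have "a \<in> tuples K2 2 \<longleftrightarrow> a \<in> {[1,1],[1,2],[2,1],[2,2]}" for a
  proof
    assume "a \<in> tuples K2 2"
    then have l: "length a = 2" and r: "\<forall>i<2. 1 \<le> a ! i \<and> a ! i \<le> 2" by (auto simp: tuples_def)
    then obtain x y where a: "a = [x,y]" by (auto simp: numeral_2_eq_2 length_Suc_conv)
    have "1 \<le> x" "x \<le> 2" "1 \<le> y" "y \<le> 2" using r[rule_format, of 0] r[rule_format, of 1] a by auto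
    then have "x = 1 \<or> x = 2" "y = 1 \<or> y = 2" by arith+
    then show "a \<in> {[1,1],[1,2],[2,1],[2,2]}" using a by auto
  next
    assume "a \<in> {[1,1],[1,2],[2,1],[2,2]}"
    then show "a \<in> tuples K2 2" by (auto simp: tuples_def less_2_cases_iff)
  qed
  then show ?thesis by blast
qed

lemma lex_less_2: "lex_less [a,b] [c,d] \<longleftrightarrow> a < c \<or> (a = c \<and> b < d)"
  unfolding lex_less_def by (auto simp: numeral_2_eq_2 less_Suc_eq ex_disj_distrib)

lemma lex_less_asym: "lex_less x y \<Longrightarrow> \<not> lex_less y x"
  unfolding lex_less_def
  by (metis linorder_neqE_nat not_less_iff_gr_or_eq min.commute)

definition Bern :: "real measure" where
  "Bern = distr (measure_pmf (pmf_of_set {0,1})) borel (\<lambda>x. x)"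

lemma Bern_prob: "prob_space Bern"
  unfolding Bern_def by (intro prob_space.prob_space_distr) (auto simp: prob_space_measure_pmf)

lemma Bern_sets: "sets Bern = sets borel"
  unfolding Bern_def by simp

lemma Bern_emeasure: "A \<in> sets borel \<Longrightarrow> emeasure Bern A = card ({0,1} \<inter> A) / 2"
  unfolding Bern_def by (subst emeasure_distr) (auto simp: emeasure_pmf_of_set)

lemma Bern_integral: "(f::real\<Rightarrow>real) \<in> borel_measurable borel \<Longrightarrow> (\<integral>x. f x \<partial>Bern) = (f 0 + f 1) / 2"
  unfolding Bern_def by (subst integral_distr) (auto simp: integral_pmf_of_set)

lemma Bern_integrable: "(f::real\<Rightarrow>real) \<in> borel_measurable borel \<Longrightarrow> integrable Bern f"
  unfolding Bern_def by (subst integrable_distr_eq) (auto intro!: integrable_measure_pmf_finite)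

lemma Bern_mean: "arm_mean Bern = 1/2"
  unfolding arm_mean_def by (subst Bern_integral) auto

lemma Bern_AE: "AE x in Bern. 0 \<le> x \<and> x \<le> 1"
  unfolding Bern_def by (subst AE_distr_iff) (auto simp: AE_measure_pmf_iff)

lemma cosh_bound: "(exp x + exp (-x)) / 2 \<le> exp ((x::real)^2)"
proof -
  have main: "(exp x + exp (-x)) / 2 \<le> exp (x^2)" if x0: "0 \<le> x" for x :: real
  proof (cases "x \<le> 1")
    case True
    have e1: "exp x \<le> 1 + x + x^2" using exp_bound[of x] x0 True by simp
    have "exp x \<ge> 1 + x" by (rule exp_ge_add_one_self)
    then have "exp (-x) \<le> 1 / (1 + x)" using x0 by (simp add: exp_minus field_simps)
    also have "\<dots> \<le> 1 - x + x^2" using x0 by (simp add: field_simps power2_eq_square)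
    finally have "(exp x + exp (-x)) / 2 \<le> 1 + x^2" using e1 by simp
    also have "\<dots> \<le> exp (x^2)" by (rule exp_ge_add_one_self)
    finally show ?thesis .
  next
    case False
    have "exp (-x) \<le> exp x" using x0 by simp
    then have "(exp x + exp (-x)) / 2 \<le> exp x" by simp
    also have "\<dots> \<le> exp (x^2)" using False by (simp add: power2_eq_square)
    finally show ?thesis .
  qed
  show ?thesis
  proof (cases "x \<ge> 0")
    case True then show ?thesis by (rule main)
  next
    case False then show ?thesis using main[of "-x"] by (simp add: add.commute)
  qed
qed

lemma Bern_subg: "one_subgaussian Bern"
  unfolding one_subgaussian_def Bern_mean
proof (intro allI conjI)
  fix l :: real
  show "integrable Bern (\<lambda>x. exp (l * (x - 1 / 2)))" by (auto intro: Bern_integrable)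
  have "(\<integral>x. exp (l * (x - 1 / 2)) \<partial>Bern) = (exp (l/2) + exp (-(l/2))) / 2"
    by (subst Bern_integral) (auto simp: add.commute)
  also have "\<dots> \<le> exp ((l/2)^2)" by (rule cosh_bound)
  also have "\<dots> \<le> exp (l^2/2)" by (simp add: power2_eq_square)
  finally show "(\<integral>x. exp (l * (x - 1 / 2)) \<partial>Bern) \<le> exp (l^2/2)" .
qed


definition Fc :: "nat list \<Rightarrow> real measure" where
  "Fc a = (if a = [1,1] then return borel 0 else if a = [1,2] then Bern else return borel 1)"

lemma Fc_sets: "sets (Fc a) = sets borel"
  by (simp add: Fc_def Bern_sets)

lemma Fc_prob: "prob_space (Fc a)"
  by (simp add: Fc_def Bern_prob prob_space_return)

abbreviation Om :: "nat \<Rightarrow> (nat \<times> nat \<times> nat list \<Rightarrow> real) measure" where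
  "Om T \<equiv> reward_space K2 2 Fc T"

abbreviation IT :: "nat \<Rightarrow> (nat \<times> nat \<times> nat list) set" where
  "IT T \<equiv> {..<2} \<times> {1..T} \<times> tuples K2 2"

lemma Om_def: "Om T = PiM (IT T) (\<lambda>(i, s, a). Fc a)"
  by (simp add: reward_space_def)

lemma comp_meas[measurable]: "(\<lambda>\<omega>. \<omega> j) \<in> borel_measurable (Om T)"
proof (cases "j \<in> IT T")
  case True
  have "(\<lambda>\<omega>. \<omega> j) \<in> measurable (Om T) ((\<lambda>(i, s, a). Fc a) j)"
    unfolding Om_def by (rule measurable_component_singleton[OF True])
  moreover have "sets ((\<lambda>(i, s, a). Fc a) j) = sets borel"
    by (cases j) (auto simp: Fc_sets)
  ultimately show ?thesis using measurable_cong_sets[OF refl, of "(\<lambda>(i, s, a). Fc a) j" borel "Om T"] by simp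
next
  case False
  have "\<omega> j = undefined" if "\<omega> \<in> space (Om T)" for \<omega>
    using that False unfolding Om_def space_PiM PiE_def extensional_def by blast
  then show ?thesis using measurable_cong[where g="\<lambda>_. undefined" and M="Om T" and f="\<lambda>\<omega>. \<omega> j" and M'=borel]
    by simp
qed

abbreviation T4 :: "nat list set" where "T4 \<equiv> {[1,1],[1,2],[2,1],[2,2]}"

definition ismax :: "(nat list \<Rightarrow> ereal) \<Rightarrow> nat list \<Rightarrow> bool" where
  "ismax f a \<longleftrightarrow> f [1,1] \<le> f a \<and> f [1,2] \<le> f a \<and> f [2,1] \<le> f a \<and> f [2,2] \<le> f a"

definition la :: "(nat list \<Rightarrow> ereal) \<Rightarrow> nat list" where
  "la f = (if ismax f [1,1] then [1,1] else if ismax f [1,2] then [1,2]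
           else if ismax f [2,1] then [2,1] else [2,2])"

lemma lex_argmax_unique:
  assumes "a \<in> A" "\<forall>b\<in>A. f b \<le> f a" "\<forall>b\<in>A. (\<forall>c\<in>A. f c \<le> f b) \<longrightarrow> b \<noteq> a \<longrightarrow> lex_less a b"
  shows "lex_argmax A f = a"
  unfolding lex_argmax_def
proof (rule the_equality)
  show "a \<in> A \<and> (\<forall>b\<in>A. f b \<le> f a) \<and> (\<forall>b\<in>A. (\<forall>c\<in>A. f c \<le> f b) \<longrightarrow> b \<noteq> a \<longrightarrow> lex_less a b)"
    using assms by blast
next
  fix x assume "x \<in> A \<and> (\<forall>b\<in>A. f b \<le> f x) \<and> (\<forall>b\<in>A. (\<forall>c\<in>A. f c \<le> f b) \<longrightarrow> b \<noteq> x \<longrightarrow> lex_less x b)"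
  then show "x = a" using assms lex_less_asym by blast
qed

lemma ball_T4: "(\<forall>c\<in>T4. f c \<le> f b) \<longleftrightarrow> ismax f b"
  by (simp add: ismax_def)

lemma ismax_ex: "ismax f [1,1] \<or> ismax f [1,2] \<or> ismax f [2,1] \<or> ismax f [2,2]"
  unfolding ismax_def by (smt (verit) linorder_le_cases order_trans)

lemma la_props: "la f \<in> T4 \<and> (\<forall>b\<in>T4. f b \<le> f (la f)) \<and>
   (\<forall>b\<in>T4. (\<forall>c\<in>T4. f c \<le> f b) \<longrightarrow> b \<noteq> la f \<longrightarrow> lex_less (la f) b)"
  unfolding ball_T4
proof -
  consider "ismax f [1,1]" | "\<not> ismax f [1,1]" "ismax f [1,2]"
    | "\<not> ismax f [1,1]" "\<not> ismax f [1,2]" "ismax f [2,1]"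
    | "\<not> ismax f [1,1]" "\<not> ismax f [1,2]" "\<not> ismax f [2,1]" "ismax f [2,2]"
    using ismax_ex by blast
  then show "la f \<in> T4 \<and> ismax f (la f) \<and> (\<forall>b\<in>T4. ismax f b \<longrightarrow> b \<noteq> la f \<longrightarrow> lex_less (la f) b)"
  proof cases
    case 1 then show ?thesis unfolding la_def by (simp add: lex_less_2)
  next
    case 2 then show ?thesis unfolding la_def by (simp add: lex_less_2)
  next
    case 3 then show ?thesis unfolding la_def by (simp add: lex_less_2)
  next
    case 4 then show ?thesis unfolding la_def by (simp add: lex_less_2)
  qed
qed

lemma lex_argmax_la: "lex_argmax (tuples K2 2) f = la f"
  unfolding tuples_K2 by (rule lex_argmax_unique) (use la_props in blast)+

lemma la_meas[measurable]:
  assumes [measurable]: "\<And>a. (\<lambda>x. g x a) \<in> borel_measurable M"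
  shows "(\<lambda>x. la (g x)) \<in> measurable M (count_space UNIV)"
  unfolding la_def ismax_def
  by measurable


lemma n_init_K2: "n_init K2 2 = 4"
  by (simp add: n_init_def numeral_2_eq_2)

lemma init_K2: "init_tuple K2 2 r = [((r - 1) div 2) mod 2 + 1, (r - 1) mod 2 + 1]"
proof -
  have a: "{0::nat<..<2} = {1}" by auto
  have b: "{1::nat<..<2} = {}" by auto
  show ?thesis unfolding init_tuple_def by (simp add: upt_rec a b)
qed

lemma next_K2: "next_tuple K2 2 \<omega> h = (if length h < 4 then init_tuple K2 2 (Suc (length h))
   else [la (mucb_index \<omega> 0 h) ! 0, la (mucb_index \<omega> 1 h) ! 1])"
  unfolding next_tuple_def n_init_K2 lex_argmax_la by (simp add: upt_rec)

lemma idx_meas[measurable]: "(\<lambda>\<omega>. mucb_index \<omega> i h a) \<in> borel_measurable (Om T)"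
  unfolding mucb_index_def own_mean_def by measurable

lemma la_idx_meas: "(\<lambda>\<omega>. la (mucb_index \<omega> i h)) \<in> measurable (Om T) (count_space UNIV)"
  by (rule la_meas) (rule idx_meas)

lemma next_meas: "(\<lambda>\<omega>. next_tuple K2 2 \<omega> h) \<in> measurable (Om T) (count_space UNIV)"
proof (cases "length h < 4")
  case True then show ?thesis by (simp add: next_K2)
next
  case False
  have "(\<lambda>\<omega>. (\<lambda>x \<omega>. [x ! 0, la (mucb_index \<omega> 1 h) ! 1]) (la (mucb_index \<omega> 0 h)) \<omega>)
     \<in> measurable (Om T) (count_space UNIV)"
  proof (rule measurable_compose_countable[where f="\<lambda>x \<omega>. [x ! 0, la (mucb_index \<omega> 1 h) ! 1]", OF _ la_idx_meas])
    fix x :: "nat list"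
    show "(\<lambda>\<omega>. [x ! 0, la (mucb_index \<omega> 1 h) ! 1]) \<in> measurable (Om T) (count_space UNIV)"
      using measurable_compose[OF la_idx_meas[of 1 h T] measurable_count_space[of "\<lambda>y. [x!0, y!1]" UNIV]]
      by simp
  qed
  then show ?thesis using False by (simp add: next_K2)
qed

lemma hist_meas: "(\<lambda>\<omega>. mucb_history K2 2 \<omega> t) \<in> measurable (Om T) (count_space UNIV)"
proof (induction t)
  case 0 then show ?case by simp
next
  case (Suc t)
  have "(\<lambda>\<omega>. (\<lambda>h \<omega>. h @ [next_tuple K2 2 \<omega> h]) (mucb_history K2 2 \<omega> t) \<omega>)
     \<in> measurable (Om T) (count_space UNIV)"
  proof (rule measurable_compose_countable[where f="\<lambda>h \<omega>. h @ [next_tuple K2 2 \<omega> h]", OF _ Suc.IH])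
    fix h :: "nat list list"
    show "(\<lambda>\<omega>. h @ [next_tuple K2 2 \<omega> h]) \<in> measurable (Om T) (count_space UNIV)"
      using measurable_compose[OF next_meas[of h T] measurable_count_space[of "\<lambda>y. h @ [y]" UNIV]]
      by simp
  qed
  then show ?case by simp
qed

lemma rs_meas: "(\<lambda>\<omega>. reward_sum K2 2 \<omega> i T) \<in> borel_measurable (Om T)"
proof -
  have "(\<lambda>\<omega>. (\<lambda>h \<omega>. \<Sum>s<T. \<omega> (i, Suc s, h ! s)) (mucb_history K2 2 \<omega> T) \<omega>) \<in> borel_measurable (Om T)"
  proof (rule measurable_compose_countable[where f="\<lambda>h \<omega>. \<Sum>s<T. \<omega> (i, Suc s, h ! s)", OF _ hist_meas])
    fix h :: "nat list list"
    show "(\<lambda>\<omega>. \<Sum>s<T. \<omega> (i, Suc s, h ! s)) \<in> borel_measurable (Om T)" by measurable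
  qed
  then show ?thesis by (simp add: reward_sum_def)
qed


lemma hist_len[simp]: "length (mucb_history K M \<omega> t) = t"
  by (induction t) auto

lemma next_in: "next_tuple K2 2 \<omega> h \<in> T4"
proof (cases "length h < 4")
  case True
  then have "length h = 0 \<or> length h = 1 \<or> length h = 2 \<or> length h = 3" by arith
  then show ?thesis using True by (auto simp: next_K2 init_K2)
next
  case False
  have la4: "la f \<in> T4" for f
    using la_props[of f] by blast
  have "la f ! 0 \<in> {1,2} \<and> la f ! 1 \<in> {1,2}" for f
    using la4[of f] by auto
  then have "la (mucb_index \<omega> 0 h) ! 0 \<in> {1,2}" "la (mucb_index \<omega> 1 h) ! 1 \<in> {1,2}" by blast+
  then show ?thesis using False by (auto simp: next_K2)
qed

lemma hist_in: "set (mucb_history K2 2 \<omega> t) \<subseteq> T4"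
  by (induction t) (use next_in in auto)

abbreviation init4 :: "nat list list" where "init4 \<equiv> [[1,1],[1,2],[2,1],[2,2]]"

lemma next_init: "length h < 4 \<Longrightarrow> next_tuple K2 2 \<omega> h = init4 ! length h"
proof -
  assume a: "length h < 4"
  then have "length h = 0 \<or> length h = 1 \<or> length h = 2 \<or> length h = 3" by arith
  then show ?thesis using a by (auto simp: next_K2 init_K2)
qed

lemma hist_take: "t \<le> 4 \<Longrightarrow> mucb_history K2 2 \<omega> t = take t init4"
proof (induction t)
  case 0 then show ?case by simp
next
  case (Suc t)
  then have "mucb_history K2 2 \<omega> t = take t init4" by simp
  moreover have "t < length init4" using Suc.prems by simp
  moreover have "next_tuple K2 2 \<omega> (mucb_history K2 2 \<omega> t) = init4 ! t"
    using next_init[of "mucb_history K2 2 \<omega> t" \<omega>] Suc.prems by simp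
  ultimately have "mucb_history K2 2 \<omega> (Suc t) = take t init4 @ [init4 ! t]" by simp
  also have "\<dots> = take (Suc t) init4"
    by (rule take_Suc_conv_app_nth[symmetric]) fact
  finally show ?case .
qed

lemma hist4: "mucb_history K2 2 \<omega> 4 = init4"
  using hist_take[of 4] by simp

definition supp :: "nat \<times> nat \<times> nat list \<Rightarrow> real set" where
  "supp j = (if snd (snd j) = [1,1] then {0} else if snd (snd j) = [1,2] then {0,1} else {1})"

definition G :: "nat \<Rightarrow> (nat \<times> nat \<times> nat list \<Rightarrow> real) set" where
  "G T = {\<omega>. \<forall>j\<in>IT T. \<omega> j \<in> supp j}"

lemma G_val:
  assumes "\<omega> \<in> G T" "i < 2" "1 \<le> s" "s \<le> T" "a \<in> T4"
  shows "\<omega> (i, s, a) \<in> supp (i, s, a)"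
  using assms unfolding G_def tuples_K2 by auto

lemma G_01:
  assumes "\<omega> \<in> G T" "i < 2" "1 \<le> s" "s \<le> T" "a \<in> T4"
  shows "0 \<le> \<omega> (i, s, a) \<and> \<omega> (i, s, a) \<le> 1"
  using G_val[OF assms] by (auto simp: supp_def split: if_splits)

lemma pc: "play_count (init4 @ replicate n [1,1]) a =
   (if a = [1,1] then n + 1 else if a \<in> {[1,2],[2,1],[2,2]} then 1 else 0)"
  by (simp add: play_count_def filter_replicate)

lemma num_other:
  assumes "a \<noteq> [1,1]"
  shows "(\<Sum>s<length (init4 @ replicate n [1,1]).
            if (init4 @ replicate n [1,1]) ! s = a then \<omega> (i, Suc s, a) else 0)
        = (if a = [1,2] then \<omega> (i, 2, a) else if a = [2,1] then \<omega> (i, 3, a)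
           else if a = [2,2] then \<omega> (i, 4, a) else 0)"
proof -
  let ?h = "init4 @ replicate n [1,1]"
  let ?f = "\<lambda>s. if ?h ! s = a then \<omega> (i, Suc s, a) else 0"
  have len: "length ?h = n + 4" by simp
  have "sum ?f {..<length ?h} = sum ?f {0..<n+4}" by (simp only: len lessThan_atLeast0)
  also have "\<dots> = sum ?f {0..<4} + sum ?f {4..<n+4}"
    by (rule sum.atLeastLessThan_concat[symmetric]) auto
  also have "sum ?f {4..<n+4} = 0"
    using assms by (intro sum.neutral) (auto simp: nth_append)
  also have "sum ?f {0..<4} = (if a = [1,2] then \<omega> (i, 2, a) else if a = [2,1] then \<omega> (i, 3, a)
           else if a = [2,2] then \<omega> (i, 4, a) else 0)"
    proof -
      have e: "{0::nat..<4} = {0,1,2,3}" by auto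
      show ?thesis using assms by (simp add: e nth_append eval_nat_numeral)
    qed
  finally show ?thesis by simp
qed

lemma num_11:
  assumes "\<omega> \<in> G T" "i < 2" "n + 4 \<le> T"
  shows "(\<Sum>s<length (init4 @ replicate n [1,1]).
            if (init4 @ replicate n [1,1]) ! s = [1,1] then \<omega> (i, Suc s, [1,1]) else 0) = 0"
proof (intro sum.neutral ballI)
  fix s assume "s \<in> {..<length (init4 @ replicate n [1,1])}"
  then have "Suc s \<le> T" using assms by auto
  then have "\<omega> (i, Suc s, [1,1]) = 0" using G_val[OF assms(1,2), of "Suc s" "[1,1]"] by (auto simp: supp_def)
  then show "(if (init4 @ replicate n [1,1]) ! s = [1,1] then \<omega> (i, Suc s, [1,1]) else 0) = 0" by simp
qed


lemma la_12: "f [1,1] < f [1,2] \<Longrightarrow> f [2,1] \<le> f [1,2] \<Longrightarrow> f [2,2] \<le> f [1,2] \<Longrightarrow> la f = [1,2]"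
  unfolding la_def ismax_def by auto

lemma la_21: "f [1,1] < f [2,1] \<Longrightarrow> f [1,2] < f [2,1] \<Longrightarrow> f [2,2] \<le> f [2,1] \<Longrightarrow> la f = [2,1]"
  unfolding la_def ismax_def by auto

lemma idx_vals:
  assumes G: "\<omega> \<in> G T" and i: "i < 2" and nT: "n + 4 \<le> T"
  defines "h \<equiv> init4 @ replicate n [1,1]"
  defines "L \<equiv> 2 * ln (1 / mucb_delta (n + 4))"
  shows "mucb_index \<omega> i h [1,1] = ereal (sqrt (L / real (n + 1)))"
    and "mucb_index \<omega> i h [1,2] = ereal (\<omega> (i, 2, [1,2]) + sqrt L)"
    and "mucb_index \<omega> i h [2,1] = ereal (1 + sqrt L)"
    and "mucb_index \<omega> i h [2,2] = ereal (1 + sqrt L)"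
proof -
  have len: "length h = n + 4" unfolding h_def by simp
  have p11: "play_count h [1,1] = n + 1" unfolding h_def pc by simp
  have p12: "play_count h [1,2] = 1" unfolding h_def pc by simp
  have p21: "play_count h [2,1] = 1" unfolding h_def pc by simp
  have p22: "play_count h [2,2] = 1" unfolding h_def pc by simp
  have s11: "(\<Sum>s<length h. if h ! s = [1,1] then \<omega> (i, Suc s, [1,1]) else 0) = 0"
    unfolding h_def by (rule num_11[OF G i nT])
  have s12: "(\<Sum>s<length h. if h ! s = [1,2] then \<omega> (i, Suc s, [1,2]) else 0) = \<omega> (i, 2, [1,2])"
    unfolding h_def by (subst num_other) simp_all
  have s21: "(\<Sum>s<length h. if h ! s = [2,1] then \<omega> (i, Suc s, [2,1]) else 0) = \<omega> (i, 3, [2,1])"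
    unfolding h_def by (subst num_other) simp_all
  have s22: "(\<Sum>s<length h. if h ! s = [2,2] then \<omega> (i, Suc s, [2,2]) else 0) = \<omega> (i, 4, [2,2])"
    unfolding h_def by (subst num_other) simp_all
  have o3: "\<omega> (i, 3, [2,1]) = 1" using G_val[OF G i, of 3 "[2,1]"] nT by (simp add: supp_def)
  have o4: "\<omega> (i, 4, [2,2]) = 1" using G_val[OF G i, of 4 "[2,2]"] nT by (simp add: supp_def)
  show "mucb_index \<omega> i h [1,1] = ereal (sqrt (L / real (n + 1)))"
    unfolding mucb_index_def own_mean_def p11 s11 using len by (simp add: L_def)
  show "mucb_index \<omega> i h [1,2] = ereal (\<omega> (i, 2, [1,2]) + sqrt L)"
    unfolding mucb_index_def own_mean_def p12 s12 using len by (simp add: L_def)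
  show "mucb_index \<omega> i h [2,1] = ereal (1 + sqrt L)"
    unfolding mucb_index_def own_mean_def p21 s21 using o3 len by (simp add: L_def)
  show "mucb_index \<omega> i h [2,2] = ereal (1 + sqrt L)"
    unfolding mucb_index_def own_mean_def p22 s22 using o4 len by (simp add: L_def)
qed

lemma L_nonneg: "0 \<le> 2 * ln (1 / mucb_delta (n + 4))"
  unfolding mucb_delta_def by simp

lemma step_next:
  assumes G: "\<omega> \<in> G T" and e0: "\<omega> (0, 2, [1,2]) = 1" and e1: "\<omega> (1, 2, [1,2]) = 0"
    and nT: "n + 4 \<le> T"
  shows "next_tuple K2 2 \<omega> (init4 @ replicate n [1,1]) = [1,1]"
proof -
  define L where "L = 2 * ln (1 / mucb_delta (n + 4))"
  have L0: "0 \<le> L" unfolding L_def by (rule L_nonneg)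
  have "L \<le> L * (1 + real n)" using L0 by (simp add: algebra_simps)
  then have "L / real (n + 1) \<le> L" by (simp add: divide_le_eq algebra_simps)
  then have "sqrt (L / real (n + 1)) \<le> sqrt L" by simp
  then have s1: "sqrt (L / real (n + 1)) < 1 + sqrt L" by linarith
  have s2: "sqrt L < 1 + sqrt L" by simp
  have v0: "la (mucb_index \<omega> 0 (init4 @ replicate n [1,1])) = [1,2]"
    by (rule la_12) (use s1 s2 idx_vals[OF G _ nT, of 0, folded L_def] e0 in simp_all)
  have v1: "la (mucb_index \<omega> 1 (init4 @ replicate n [1,1])) = [2,1]"
    by (rule la_21) (use s1 s2 idx_vals[OF G _ nT, of 1, folded L_def] e1 in simp_all)
  show ?thesis using v0 v1 by (simp add: next_K2)
qed


lemma stuck: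
  assumes G: "\<omega> \<in> G T" and e0: "\<omega> (0, 2, [1,2]) = 1" and e1: "\<omega> (1, 2, [1,2]) = 0"
  shows "n + 4 \<le> T \<Longrightarrow> mucb_history K2 2 \<omega> (n + 4) = init4 @ replicate n [1,1]"
proof (induction n)
  case 0 then show ?case using hist4 by simp
next
  case (Suc n)
  then have IH: "mucb_history K2 2 \<omega> (n + 4) = init4 @ replicate n [1,1]" by simp
  have "mucb_history K2 2 \<omega> (Suc n + 4) = mucb_history K2 2 \<omega> (n + 4) @ [next_tuple K2 2 \<omega> (mucb_history K2 2 \<omega> (n + 4))]"
    by (simp only: add_Suc mucb_history.simps)
  also have "\<dots> = (init4 @ replicate n [1,1]) @ [[1,1]]"
    unfolding IH using step_next[OF G e0 e1, of n] Suc.prems by simp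
  also have "\<dots> = init4 @ replicate (Suc n) [1,1]" by (simp add: replicate_append_same)
  finally show ?case .
qed

lemma term_01:
  assumes G: "\<omega> \<in> G T" and i: "i < 2" and s: "s < T"
  shows "0 \<le> \<omega> (i, Suc s, mucb_history K2 2 \<omega> T ! s) \<and> \<omega> (i, Suc s, mucb_history K2 2 \<omega> T ! s) \<le> 1"
proof -
  have "mucb_history K2 2 \<omega> T ! s \<in> set (mucb_history K2 2 \<omega> T)" using s by simp
  then have "mucb_history K2 2 \<omega> T ! s \<in> T4" using hist_in[of \<omega> T] by blast
  then show ?thesis using G_01[OF G i, of "Suc s"] s by simp
qed

lemma rs_bound:
  assumes G: "\<omega> \<in> G T" and i: "i < 2"
  shows "0 \<le> reward_sum K2 2 \<omega> i T \<and> reward_sum K2 2 \<omega> i T \<le> real T"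
proof
  show "0 \<le> reward_sum K2 2 \<omega> i T"
    unfolding reward_sum_def by (rule sum_nonneg) (use term_01[OF G i] in auto)
  have "reward_sum K2 2 \<omega> i T \<le> of_nat (card {..<T}) * 1"
    unfolding reward_sum_def by (rule sum_bounded_above) (use term_01[OF G i] in auto)
  then show "reward_sum K2 2 \<omega> i T \<le> real T" by simp
qed

lemma rs_E:
  assumes G: "\<omega> \<in> G T" and i: "i < 2" and e0: "\<omega> (0, 2, [1,2]) = 1" and e1: "\<omega> (1, 2, [1,2]) = 0"
    and T4: "4 \<le> T"
  shows "reward_sum K2 2 \<omega> i T \<le> 4"
proof -
  let ?f = "\<lambda>s. \<omega> (i, Suc s, mucb_history K2 2 \<omega> T ! s)"
  have H: "mucb_history K2 2 \<omega> T = init4 @ replicate (T - 4) [1,1]"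
    using stuck[OF G e0 e1, of "T - 4"] T4 by simp
  have "reward_sum K2 2 \<omega> i T = sum ?f {0..<T}" unfolding reward_sum_def by (simp add: lessThan_atLeast0)
  also have "\<dots> = sum ?f {0..<4} + sum ?f {4..<T}"
    by (rule sum.atLeastLessThan_concat[symmetric]) (use T4 in auto)
  also have "sum ?f {4..<T} = 0"
  proof (intro sum.neutral ballI)
    fix s assume s: "s \<in> {4..<T}"
    then have "mucb_history K2 2 \<omega> T ! s = [1,1]" unfolding H by (auto simp: nth_append)
    moreover have "\<omega> (i, Suc s, [1,1]) = 0" using G_val[OF G i, of "Suc s" "[1,1]"] s by (auto simp: supp_def)
    ultimately show "?f s = 0" by simp
  qed
  also have "sum ?f {0..<4} \<le> of_nat (card {0::nat..<4}) * 1"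
    by (rule sum_bounded_above) (use term_01[OF G i] T4 in auto)
  finally show ?thesis by simp
qed


lemma ret_prob: "prob_space (return borel (c::real))"
  by (rule prob_space_return) simp

lemma ret_mean: "arm_mean (return borel (c::real)) = c"
  unfolding arm_mean_def by (rule integral_return) auto

lemma ret_AE: "0 \<le> c \<Longrightarrow> c \<le> 1 \<Longrightarrow> AE x in return borel (c::real). 0 \<le> x \<and> x \<le> 1"
  by (subst AE_return) auto

lemma ret_subg: "one_subgaussian (return borel (c::real))"
  unfolding one_subgaussian_def ret_mean
proof (intro allI conjI)
  fix l :: real
  interpret R: prob_space "return borel c" by (rule ret_prob)
  show "integrable (return borel c) (\<lambda>x. exp (l * (x - c)))"
  proof (rule R.integrable_const_bound[where B=1])
    show "AE x in return borel c. norm (exp (l * (x - c))) \<le> 1"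
      by (subst AE_return) auto
  qed simp
  have "(\<integral>x. exp (l * (x - c)) \<partial>return borel c) = 1"
    by (subst integral_return) auto
  then show "(\<integral>x. exp (l * (x - c)) \<partial>return borel c) \<le> exp (l^2/2)" by simp
qed

lemma Fc_AE: "AE x in Fc a. 0 \<le> x \<and> x \<le> 1"
  unfolding Fc_def using ret_AE[of 0] ret_AE[of 1] Bern_AE by simp

lemma Fc_subg: "one_subgaussian (Fc a)"
  unfolding Fc_def by (auto intro: ret_subg Bern_subg)

lemma Fc_mean: "arm_mean (Fc a) = (if a = [1,1] then 0 else if a = [1,2] then 1/2 else 1)"
  unfolding Fc_def by (simp add: ret_mean Bern_mean)

lemma mu_star_1: "mu_star K2 2 Fc = 1"
  unfolding mu_star_def tuples_K2 by (simp add: Fc_mean)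

lemma psf: "product_sigma_finite (\<lambda>(i, s, a). Fc a)"
  unfolding product_sigma_finite_def
  by (simp add: prob_space_imp_sigma_finite Fc_prob split: prod.splits)

lemma finite_IT: "finite (IT T)"
  by (simp add: tuples_K2)

lemma Om_prob: "prob_space (Om T)"
  unfolding Om_def by (rule prob_space_PiM) (auto simp: Fc_prob split: prod.splits)

lemma sets_j: "sets ((\<lambda>(i, s, a). Fc a) j) = sets borel"
  by (cases j) (simp add: Fc_sets)

lemma supp_sets: "supp j \<in> sets ((\<lambda>(i, s, a). Fc a) j)"
  unfolding sets_j supp_def by auto

lemma supp_meas: "emeasure ((\<lambda>(i, s, a). Fc a) j) (supp j) = 1"
  by (cases j) (auto simp: supp_def Fc_def Bern_emeasure)

lemma GS_meas: "emeasure (Om T) (PiE (IT T) supp) = 1"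
  unfolding Om_def
  by (subst product_sigma_finite.emeasure_PiM[OF psf finite_IT]) (auto simp: supp_sets supp_meas)

lemma AE_G: "AE \<omega> in Om T. \<omega> \<in> G T"
proof -
  interpret P: prob_space "Om T" by (rule Om_prob)
  have "P.prob (PiE (IT T) supp) = 1" unfolding measure_def using GS_meas[of T] by simp
  then have "AE \<omega> in Om T. \<omega> \<in> PiE (IT T) supp" by (rule P.AE_prob_1)
  then show ?thesis by eventually_elim (auto simp: G_def)
qed

definition X :: "nat \<times> nat \<times> nat list \<Rightarrow> real set" where
  "X j = (if j = (0, 2, [1,2]) then {1} else if j = (1, 2, [1,2]) then {0} else supp j)"

lemma X_sets: "X j \<in> sets ((\<lambda>(i, s, a). Fc a) j)"
  unfolding X_def using supp_sets[of j] sets_j[of j] by auto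

lemma E_sets: "PiE (IT T) X \<in> sets (Om T)"
  unfolding Om_def by (rule sets_PiM_I_finite[OF finite_IT X_sets])

lemma half_sq: "(inverse 2::ennreal) * inverse 2 = 1/4"
proof -
  have "(inverse 2::ennreal) * inverse 2 = inverse (2 * 2)"
    by (rule ennreal_inverse_mult[symmetric]) auto
  also have "\<dots> = 1/4" by (simp add: divide_ennreal_def)
  finally show ?thesis .
qed

lemma quarter: "enn2real (1/4 :: ennreal) = 1/4"
proof -
  have "ennreal 1 / ennreal 4 = ennreal (1/4)" by (rule divide_ennreal) auto
  then have "(1/4 :: ennreal) = ennreal (1/4)" by simp
  then show ?thesis by simp
qed

lemma E_meas: assumes "2 \<le> T" shows "emeasure (Om T) (PiE (IT T) X) = 1/4"
proof -
  let ?m = "\<lambda>j. emeasure ((\<lambda>(i, s, a). Fc a) j) (X j)"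
  have "emeasure (Om T) (PiE (IT T) X) = (\<Prod>j\<in>IT T. ?m j)"
    unfolding Om_def by (rule product_sigma_finite.emeasure_PiM[OF psf finite_IT X_sets])
  also have "\<dots> = (\<Prod>j\<in>{(0, 2, [1,2]), (1, 2, [1,2])}. ?m j)"
  proof (rule prod.mono_neutral_right[OF finite_IT])
    show "{(0, 2, [1,2]), (1, 2, [1,2])} \<subseteq> IT T" using assms by (auto simp: tuples_K2)
    show "\<forall>j\<in>IT T - {(0, 2, [1,2]), (1, 2, [1,2])}. ?m j = 1"
      using supp_meas by (auto simp: X_def)
  qed
  also have "\<dots> = 1/4"
    by (simp add: X_def Fc_def Bern_emeasure half_sq)
  finally show ?thesis .
qed


lemma main:
  assumes T8: "8 \<le> T" and i: "i < 2"
  shows "integrable (reward_space K2 2 Fc T) (\<lambda>\<omega>. reward_sum K2 2 \<omega> i T) \<and>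
         expected_regret K2 2 Fc i T \<ge> 1/8 * real T"
proof -
  interpret P: prob_space "Om T" by (rule Om_prob)
  let ?S = "\<lambda>\<omega>. reward_sum K2 2 \<omega> i T"
  let ?E = "PiE (IT T) X"
  let ?R = "\<lambda>\<omega>. real T - (real T - 4) * indicator ?E \<omega>"
  have intS: "integrable (Om T) ?S"
  proof (rule P.integrable_const_bound[where B="real T"])
    show "AE \<omega> in Om T. norm (?S \<omega>) \<le> real T"
      using AE_G by eventually_elim (use rs_bound i in auto)
  qed (rule rs_meas)
  have ind: "integrable (Om T) (indicator ?E :: _ \<Rightarrow> real)"
    by (rule integrable_real_indicator[OF E_sets]) (simp add: P.emeasure_finite less_top[symmetric])
  have intR: "integrable (Om T) ?R"
    by (rule Bochner_Integration.integrable_diff[OF _ integrable_mult_right[OF ind]]) simp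
  have le: "AE \<omega> in Om T. ?S \<omega> \<le> ?R \<omega>"
    using AE_G
  proof eventually_elim
    case (elim \<omega>)
    show ?case
    proof (cases "\<omega> \<in> ?E")
      case True
      have "(0::nat, 2::nat, [1::nat,2]) \<in> IT T" "(1::nat, 2::nat, [1::nat,2]) \<in> IT T"
        using T8 by (auto simp: tuples_K2)
      then have "\<omega> (0, 2, [1,2]) \<in> X (0, 2, [1,2])" "\<omega> (1, 2, [1,2]) \<in> X (1, 2, [1,2])"
        using True by (auto simp: PiE_iff)
      then have e: "\<omega> (0, 2, [1,2]) = 1" "\<omega> (1, 2, [1,2]) = 0" by (auto simp: X_def)
      have "?S \<omega> \<le> 4" using rs_E[OF elim i e] T8 by simp
      then show ?thesis using True by simp
    next
      case False
      then show ?thesis using rs_bound[OF elim i] by simp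
    qed
  qed
  have "(\<integral>\<omega>. ?S \<omega> \<partial>Om T) \<le> (\<integral>\<omega>. ?R \<omega> \<partial>Om T)"
    by (rule integral_mono_AE[OF intS intR le])
  also have "(\<integral>\<omega>. ?R \<omega> \<partial>Om T) = real T - (real T - 4) * measure (Om T) ?E"
    using E_sets ind by (subst Bochner_Integration.integral_diff) (auto simp: P.prob_space)
  also have "measure (Om T) ?E = 1/4"
    unfolding measure_def using E_meas[of T] T8 quarter by simp
  finally have "(\<integral>\<omega>. ?S \<omega> \<partial>Om T) \<le> real T - (real T - 4) * (1/4)" .
  then have "expected_regret K2 2 Fc i T \<ge> (real T - 4) / 4"
    unfolding expected_regret_def mu_star_1 by linarith
  moreover have "(real T - 4) / 4 \<ge> 1/8 * real T" using T8 by simp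
  ultimately show ?thesis using intS by simp
qed

theorem theorem4:
  shows "\<exists>(M::nat) (K::nat \<Rightarrow> nat) (F::nat list \<Rightarrow> real measure).
           M \<ge> 1 \<and> (\<forall>i<M. K i \<ge> 1) \<and>
           (\<forall>a\<in>tuples K M. prob_space (F a) \<and> sets (F a) = sets borel \<and>
               (AE x in F a. 0 \<le> x \<and> x \<le> 1) \<and> one_subgaussian (F a)) \<and>
           (\<exists>c>0. \<exists>T0. \<forall>T\<ge>T0. \<forall>i<M.
               integrable (reward_space K M F T) (\<lambda>\<omega>. reward_sum K M \<omega> i T) \<and>
               expected_regret K M F i T \<ge> c * real T)"
proof (intro exI conjI)
  show "(1::nat) \<le> 2" by simp
  show "\<forall>i<2. (1::nat) \<le> K2 i" by simp
  show "\<forall>a\<in>tuples K2 2. prob_space (Fc a) \<and> sets (Fc a) = sets borel \<and>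
      (AE x in Fc a. 0 \<le> x \<and> x \<le> 1) \<and> one_subgaussian (Fc a)"
    using Fc_prob Fc_sets Fc_AE Fc_subg by blast
  show "\<forall>T\<ge>8. \<forall>i<2. integrable (reward_space K2 2 Fc T) (\<lambda>\<omega>. reward_sum K2 2 \<omega> i T) \<and>
      1/8 * real T \<le> expected_regret K2 2 Fc i T"
    using main by blast
  show "(0::real) < 1/8" by simp
qed

end
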